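(* Let $\pi=(\pi_n^{n+1}\colon(X_{n+1},f_{n+1})\to(X_n,f_n))_{n\ge1}$ be an inverse sequence of equivariant maps and let $(X,f)=\lim_\pi(X_n,f_n)$. Then $CR(f)=\{x=(x_n)_{n\ge1}\in X: x_n\in CR(f_n)\ \text{for all } n\ge1\}$.
   Context: Each $X_n$ is a compact metric space, $f_n$ a continuous self-map, $\pi_n^{n+1}\colon X_{n+1}\to X_n$ continuous with $f_n\circ\pi_n^{n+1}=\pi_n^{n+1}\circ f_{n+1}$. $X=\{(x_n)\in\prod_n X_n:\pi_n^{n+1}(x_{n+1})=x_n\ \forall n\}$ with the product topology and $f((x_n))=(f_n(x_n))$. For a continuous map $g$ of a compact metric space $(Y,d)$, a $\delta$-chain is a finite sequence $(y_i)_{i=0}^k$, $k>0$, with $d(g(y_i),y_{i+1})\le\delta$ for all $i<k$, and $CR(g)$ is the set of $y$ such that for every $\delta>0$ there is a $\delta$-chain with $y_0=y_k=y$. *)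

theory Defs
  imports "HOL-Analysis.Analysis"
begin

definition delta_chain :: "('a::metric_space \<Rightarrow> 'a) \<Rightarrow> 'a set \<Rightarrow> real \<Rightarrow> nat \<Rightarrow> (nat \<Rightarrow> 'a) \<Rightarrow> bool" where
  "delta_chain g Y \<delta> k y \<longleftrightarrow> 0 < k \<and> (\<forall>i\<le>k. y i \<in> Y) \<and> (\<forall>i<k. dist (g (y i)) (y (Suc i)) \<le> \<delta>)"

definition CR :: "('a::metric_space \<Rightarrow> 'a) \<Rightarrow> 'a set \<Rightarrow> 'a set" where
  "CR g Y = {x \<in> Y. \<forall>\<delta>>0. \<exists>k y. delta_chain g Y \<delta> k y \<and> y 0 = x \<and> y k = x}"

text \<open>Inverse limit of (Xs n, pi n : Xs (Suc n) \<rightarrow> Xs n), as a subset of nat \<Rightarrow> 'a,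
  which carries the metric of Function_Metric inducing the product topology.\<close>

definition inv_lim :: "(nat \<Rightarrow> 'a set) \<Rightarrow> (nat \<Rightarrow> 'a \<Rightarrow> 'a) \<Rightarrow> (nat \<Rightarrow> 'a) set" where
  "inv_lim Xs \<pi> = {x. (\<forall>n. x n \<in> Xs n) \<and> (\<forall>n. \<pi> n (x (Suc n)) = x n)}"

definition lim_map :: "(nat \<Rightarrow> 'a \<Rightarrow> 'a) \<Rightarrow> (nat \<Rightarrow> 'a) \<Rightarrow> (nat \<Rightarrow> 'a)" where
  "lim_map fs x = (\<lambda>n. fs n (x n))"

end

theory Submission
  imports Defs
begin

lemma dist_coord:
  fixes x y :: "nat \<Rightarrow> 'a::metric_space"
  shows "(1/2)^(to_nat i) * min (dist (x i) (y i)) 1 \<le> dist x y"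
proof -
  have "(1/2)^(to_nat i) * min (dist (x i) (y i)) 1
     = sum (\<lambda>p. (1/2)^p * min (dist (x (from_nat p)) (y (from_nat p))) 1) {to_nat i}"
    by simp
  also have "... \<le> (\<Sum>p. (1/2)^p * min (dist (x (from_nat p)) (y (from_nat p))) 1)"
    apply (rule sum_le_suminf)
    by (rule summable_comparison_test'[of "\<lambda>n. (1/2)^n"], auto simp add: summable_geometric_iff)
  also have "... = dist x y" unfolding dist_fun_def by auto
  finally show ?thesis .
qed

lemma coord_close:
  assumes "(e::real) > 0"
  shows "\<exists>d>0. \<forall>x y::nat \<Rightarrow> 'a::metric_space. dist x y < d \<longrightarrow> dist (x i) (y i) < e"
proof (intro exI[of _ "(1/2)^(to_nat i) * min e 1"] conjI allI impI)
  show "0 < (1/2::real)^(to_nat i) * min e 1" using assms by auto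
  fix x y :: "nat \<Rightarrow> 'a" assume "dist x y < (1/2)^(to_nat i) * min e 1"
  with dist_coord[of i x y] have "(1/2)^(to_nat i) * min (dist (x i) (y i)) 1 < (1/2)^(to_nat i) * min e 1"
    by linarith
  then have "min (dist (x i) (y i)) 1 < min e 1" by (simp add: mult_less_cancel_left_pos)
  then show "dist (x i) (y i) < e" by auto
qed

lemma first_coords:
  assumes "(d::real) > 0"
  shows "\<exists>N. \<exists>e>0. \<forall>x y::nat \<Rightarrow> 'a::metric_space. (\<forall>i\<le>N. dist (x i) (y i) < e) \<longrightarrow> dist x y < d"
proof -
  obtain N0 :: nat where N0: "(1/2::real)^N0 < d/2"
    using real_arch_pow_inv[of "d/2" "1/2::real"] assms by auto
  define N where "N = Max (from_nat ` {..N0} :: nat set)"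
  have fN: "from_nat n \<le> N" if "n \<le> N0" for n
    unfolding N_def using that by (intro Max_ge) auto
  show ?thesis
  proof (intro exI[of _ N] exI[of _ "d/8"] conjI allI impI)
    show "0 < d/8" using assms by auto
    fix x y :: "nat \<Rightarrow> 'a" assume H: "\<forall>i\<le>N. dist (x i) (y i) < d / 8"
    have "{dist (x (from_nat n)) (y (from_nat n)) |n. n \<le> N0} = (\<lambda>n. dist (x (from_nat n)) (y (from_nat n))) ` {..N0}"
      by auto
    then have M: "Max {dist (x (from_nat n)) (y (from_nat n)) |n. n \<le> N0} \<le> d/8"
    proof -
      have "\<forall>n\<in>{..N0}. dist (x (from_nat n)) (y (from_nat n)) \<le> d/8"
        using H fN by (auto intro: less_imp_le)
      then have "Max ((\<lambda>n. dist (x (from_nat n)) (y (from_nat n))) ` {..N0}) \<le> d/8"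
        by (subst Max_le_iff) auto
      then show ?thesis using \<open>{dist (x (from_nat n)) (y (from_nat n)) |n. n \<le> N0} = _\<close> by simp
    qed
    have "dist x y \<le> 2 * Max {dist (x (from_nat n)) (y (from_nat n)) |n. n \<le> N0} + (1/2)^N0"
      by (rule dist_fun_le_dist_first_terms)
    also have "... < d" using M N0 assms by linarith
    finally show "dist x y < d" .
  qed
qed

lemma ex_uniform_d:
  assumes "\<And>i. i \<le> (M::nat) \<Longrightarrow> \<exists>d>(0::real). Q i d"
    and "\<And>i d d'. Q i d \<Longrightarrow> 0 < d' \<Longrightarrow> d' \<le> d \<Longrightarrow> Q i d'"
  shows "\<exists>d>0. \<forall>i\<le>M. Q i d"
  using assms(1)
proof (induction M)
  case 0
  then show ?case by auto
next
  case (Suc M)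
  obtain d where d: "d > 0" "\<forall>i\<le>M. Q i d" using Suc by auto
  obtain d' where d': "d' > 0" "Q (Suc M) d'" using Suc by auto
  show ?case
  proof (intro exI[of _ "min d d'"] conjI allI impI)
    show "0 < min d d'" using d d' by auto
    fix i assume "i \<le> Suc M"
    then consider "i \<le> M" | "i = Suc M" by linarith
    then show "Q i (min d d')"
      by cases (use d d' assms(2) in auto)
  qed
qed

fun proj :: "(nat \<Rightarrow> 'a \<Rightarrow> 'a) \<Rightarrow> nat \<Rightarrow> nat \<Rightarrow> 'a \<Rightarrow> 'a" where
  "proj \<pi> i 0 y = y"
| "proj \<pi> i (Suc k) y = \<pi> i (proj \<pi> (Suc i) k y)"

lemma proj_maps:
  assumes "\<And>n. \<pi> n ` Xs (Suc n) \<subseteq> Xs n"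
  shows "y \<in> Xs (i+k) \<Longrightarrow> proj \<pi> i k y \<in> Xs i"
proof (induction k arbitrary: i)
  case 0 then show ?case by simp
next
  case (Suc k)
  then have "proj \<pi> (Suc i) k y \<in> Xs (Suc i)" by simp
  then show ?case using assms by auto
qed

lemma proj_cont:
  assumes "\<And>n. \<pi> n ` Xs (Suc n) \<subseteq> Xs n" "\<And>n. continuous_on (Xs (Suc n)) (\<pi> n)"
  shows "continuous_on (Xs (i+k)) (proj \<pi> i k)"
proof (induction k arbitrary: i)
  case 0 then show ?case by (simp add: continuous_on_id')
next
  case (Suc k)
  have "continuous_on (Xs (Suc i + k)) (proj \<pi> (Suc i) k)" by (rule Suc)
  moreover have "proj \<pi> (Suc i) k ` Xs (Suc i + k) \<subseteq> Xs (Suc i)"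
    using proj_maps[of \<pi> Xs, OF assms(1)] by auto
  ultimately have "continuous_on (Xs (Suc i + k)) (\<lambda>y. \<pi> i (proj \<pi> (Suc i) k y))"
    by (intro continuous_on_compose2[OF assms(2)]) auto
  then show ?case by simp
qed

lemma proj_lim:
  assumes "x \<in> inv_lim Xs \<pi>"
  shows "proj \<pi> i k (x (i+k)) = x i"
proof (induction k arbitrary: i)
  case 0 then show ?case by simp
next
  case (Suc k)
  have "proj \<pi> (Suc i) k (x (Suc i + k)) = x (Suc i)" by (rule Suc)
  then show ?case using assms by (simp add: inv_lim_def)
qed

lemma proj_equiv:
  assumes "\<And>n. \<pi> n ` Xs (Suc n) \<subseteq> Xs n"
    and "\<And>n y. y \<in> Xs (Suc n) \<Longrightarrow> fs n (\<pi> n y) = \<pi> n (fs (Suc n) y)"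
  shows "y \<in> Xs (i+k) \<Longrightarrow> fs i (proj \<pi> i k y) = proj \<pi> i k (fs (i+k) y)"
proof (induction k arbitrary: i)
  case 0 then show ?case by simp
next
  case (Suc k)
  then have y: "y \<in> Xs (Suc i + k)" by simp
  have "proj \<pi> (Suc i) k y \<in> Xs (Suc i)" using proj_maps[of \<pi> Xs, OF assms(1) y] .
  then have "fs i (proj \<pi> i (Suc k) y) = \<pi> i (fs (Suc i) (proj \<pi> (Suc i) k y))"
    using assms(2) by simp
  also have "... = \<pi> i (proj \<pi> (Suc i) k (fs (Suc i + k) y))" using Suc.IH[OF y] by simp
  finally show ?case by simp
qed

lemma approx:
  fixes Xs :: "nat \<Rightarrow> 'a::metric_space set"
  assumes cpt: "\<And>n. compact (Xs n)"
    and pi_cont: "\<And>n. continuous_on (Xs (Suc n)) (\<pi> n)"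
    and pi_maps: "\<And>n. \<pi> n ` Xs (Suc n) \<subseteq> Xs n"
    and rho: "\<rho> > 0"
  shows "\<exists>m. \<forall>v\<in>Xs (N+m). \<exists>y\<in>inv_lim Xs \<pi>. dist (proj \<pi> N m v) (y N) < \<rho>"
proof (rule ccontr)
  assume "\<not> ?thesis"
  then have "\<forall>m. \<exists>v. v \<in> Xs (N+m) \<and> (\<forall>y\<in>inv_lim Xs \<pi>. \<rho> \<le> dist (proj \<pi> N m v) (y N))"
    by (auto simp: not_less)
  then obtain vs where vs: "\<And>m. vs m \<in> Xs (N+m)"
    "\<And>m y. y \<in> inv_lim Xs \<pi> \<Longrightarrow> \<rho> \<le> dist (proj \<pi> N m (vs m)) (y N)"
    by metis
  have ne: "\<exists>c. c \<in> Xs i" for i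
  proof -
    have "vs i \<in> Xs (i + N)" using vs(1)[of i] by (simp add: add.commute)
    then show ?thesis using proj_maps[of \<pi> Xs, OF pi_maps] by blast
  qed
  define c where "c i = (SOME c. c \<in> Xs i)" for i
  have c: "c i \<in> Xs i" for i unfolding c_def using ne by (metis someI_ex)
  define t where "t m i = (if i \<le> N + m then proj \<pi> i (N+m-i) (vs m) else c i)" for m i
  have tin: "t m \<in> Pi\<^sub>E UNIV Xs" for m
  proof -
    have "t m i \<in> Xs i" for i
    proof (cases "i \<le> N + m")
      case True
      then have "vs m \<in> Xs (i + (N+m-i))" using vs(1)[of m] by simp
      then show ?thesis using True proj_maps[of \<pi> Xs, OF pi_maps] unfolding t_def by simp
    qed (simp add: t_def c)
    then show ?thesis by (simp add: PiE_UNIV_domain)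
  qed
  have "compactin (product_topology (\<lambda>i. euclidean) UNIV) (Pi\<^sub>E UNIV Xs)"
    using cpt by (simp add: compactin_PiE)
  then have "compact (Pi\<^sub>E UNIV Xs)"
    by (simp add: euclidean_product_topology)
  then have "seq_compact (Pi\<^sub>E UNIV Xs)" by (rule compact_imp_seq_compact)
  then obtain l r where l: "l \<in> Pi\<^sub>E UNIV Xs" and r: "strict_mono r" and lim: "(t \<circ> r) \<longlonglongrightarrow> l"
    using tin unfolding seq_compact_def by meson
  have coord: "(\<lambda>m. t (r m) i) \<longlonglongrightarrow> l i" for i
  proof -
    have "isCont (\<lambda>x::nat \<Rightarrow> 'a. x i) l"
      using continuous_on_product_coordinates[of i] continuous_on_eq_continuous_at open_UNIV
      by blast
    from isCont_tendsto_compose[OF this lim] show ?thesis by (simp add: o_def)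
  qed
  have lX: "l \<in> inv_lim Xs \<pi>"
    unfolding inv_lim_def
  proof (intro CollectI conjI allI)
    fix i
    show "l i \<in> Xs i" using l by (auto simp: PiE_UNIV_domain Pi_iff)
    have "(\<lambda>m. \<pi> i (t (r m) (Suc i))) \<longlonglongrightarrow> \<pi> i (l (Suc i))"
      by (rule continuous_on_tendsto_compose[OF pi_cont coord])
        (use l tin in \<open>auto simp: PiE_UNIV_domain Pi_iff\<close>)
    moreover have "eventually (\<lambda>m. \<pi> i (t (r m) (Suc i)) = t (r m) i) sequentially"
    proof (rule eventually_sequentiallyI[of "Suc i"])
      fix m assume "Suc i \<le> m"
      then have "Suc i \<le> N + r m" using seq_suble[OF r, of m] by linarith
      then have "N + r m - i = Suc (N + r m - Suc i)" by linarith
      then show "\<pi> i (t (r m) (Suc i)) = t (r m) i"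
        using \<open>Suc i \<le> N + r m\<close> unfolding t_def by simp
    qed
    ultimately have "(\<lambda>m. t (r m) i) \<longlonglongrightarrow> \<pi> i (l (Suc i))"
      using Lim_transform_eventually by fastforce
    then show "\<pi> i (l (Suc i)) = l i" using coord[of i] LIMSEQ_unique by blast
  qed
  obtain M where "\<forall>m\<ge>M. dist (t (r m) N) (l N) < \<rho>"
    using metric_LIMSEQ_D[OF coord rho] by blast
  then have "dist (t (r M) N) (l N) < \<rho>" by simp
  moreover have "t (r M) N = proj \<pi> N (r M) (vs (r M))" unfolding t_def by simp
  ultimately show False using vs(2)[OF lX, of "r M"] by simp
qed

theorem lemma3p1:
  fixes Xs :: "nat \<Rightarrow> 'a::metric_space set"
    and fs :: "nat \<Rightarrow> 'a \<Rightarrow> 'a"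
    and \<pi> :: "nat \<Rightarrow> 'a \<Rightarrow> 'a"
  assumes cpt: "\<And>n. compact (Xs n)"
    and fs_cont: "\<And>n. continuous_on (Xs n) (fs n)"
    and fs_maps: "\<And>n. fs n ` Xs n \<subseteq> Xs n"
    and pi_cont: "\<And>n. continuous_on (Xs (Suc n)) (\<pi> n)"
    and pi_maps: "\<And>n. \<pi> n ` Xs (Suc n) \<subseteq> Xs n"
    and equiv: "\<And>n y. y \<in> Xs (Suc n) \<Longrightarrow> fs n (\<pi> n y) = \<pi> n (fs (Suc n) y)"
  shows "CR (lim_map fs) (inv_lim Xs \<pi>) = {x \<in> inv_lim Xs \<pi>. \<forall>n. x n \<in> CR (fs n) (Xs n)}"
proof
  show "CR (lim_map fs) (inv_lim Xs \<pi>) \<subseteq> {x \<in> inv_lim Xs \<pi>. \<forall>n. x n \<in> CR (fs n) (Xs n)}"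
  proof (intro subsetI CollectI conjI allI)
    fix x n assume x: "x \<in> CR (lim_map fs) (inv_lim Xs \<pi>)"
    then show xX: "x \<in> inv_lim Xs \<pi>" by (simp add: CR_def)
    show "x n \<in> CR (fs n) (Xs n)"
      unfolding CR_def
    proof (intro CollectI conjI allI impI)
      show "x n \<in> Xs n" using xX by (simp add: inv_lim_def)
      fix \<delta> :: real assume "\<delta> > 0"
      then obtain \<eta> where \<eta>: "\<eta> > 0" "\<And>u v::nat \<Rightarrow> 'a. dist u v < \<eta> \<Longrightarrow> dist (u n) (v n) < \<delta>"
        using coord_close[of \<delta> n] by blast
      obtain k y where ch: "delta_chain (lim_map fs) (inv_lim Xs \<pi>) (\<eta>/2) k y" "y 0 = x" "y k = x"
      proof -
        have h: "\<eta>/2 > 0" using \<eta>(1) by simp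
        from x have "\<forall>\<delta>>0. \<exists>k y. delta_chain (lim_map fs) (inv_lim Xs \<pi>) \<delta> k y \<and> y 0 = x \<and> y k = x"
          by (simp add: CR_def)
        then have "\<exists>k y. delta_chain (lim_map fs) (inv_lim Xs \<pi>) (\<eta>/2) k y \<and> y 0 = x \<and> y k = x"
          using h by blast
        then show ?thesis using that by blast
      qed
      have "delta_chain (fs n) (Xs n) \<delta> k (\<lambda>j. y j n)"
        unfolding delta_chain_def
      proof (intro conjI allI impI)
        show "0 < k" using ch(1) by (simp add: delta_chain_def)
        fix j
        show "j \<le> k \<Longrightarrow> y j n \<in> Xs n" using ch(1) by (simp add: delta_chain_def inv_lim_def)
        assume "j < k"
        then have "dist (lim_map fs (y j)) (y (Suc j)) < \<eta>"
          using ch(1) \<eta>(1) unfolding delta_chain_def by force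
        from \<eta>(2)[OF this] show "dist (fs n (y j n)) (y (Suc j) n) \<le> \<delta>"
          by (simp add: lim_map_def)
      qed
      then show "\<exists>k y. delta_chain (fs n) (Xs n) \<delta> k y \<and> y 0 = x n \<and> y k = x n"
        using ch(2,3) by (intro exI[of _ k] exI[of _ "\<lambda>j. y j n"]) simp
    qed
  qed
next
  show "{x \<in> inv_lim Xs \<pi>. \<forall>n. x n \<in> CR (fs n) (Xs n)} \<subseteq> CR (lim_map fs) (inv_lim Xs \<pi>)"
  proof (intro subsetI)
    fix x assume "x \<in> {x \<in> inv_lim Xs \<pi>. \<forall>n. x n \<in> CR (fs n) (Xs n)}"
    then have xX: "x \<in> inv_lim Xs \<pi>" and xCR: "\<And>n. x n \<in> CR (fs n) (Xs n)" by auto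
    show "x \<in> CR (lim_map fs) (inv_lim Xs \<pi>)"
      unfolding CR_def
    proof (intro CollectI conjI allI impI)
      show "x \<in> inv_lim Xs \<pi>" by (rule xX)
      fix \<delta> :: real assume "\<delta> > 0"
      then obtain N \<epsilon>0 where \<epsilon>0: "\<epsilon>0 > 0"
        "\<And>u v::nat \<Rightarrow> 'a. (\<forall>i\<le>N. dist (u i) (v i) < \<epsilon>0) \<Longrightarrow> dist u v < \<delta>"
        using first_coords[of \<delta>] by blast
      have "\<exists>d>0. \<forall>i\<le>N. \<forall>a\<in>Xs N. \<forall>b\<in>Xs N. dist a b < d \<longrightarrow>
              dist (proj \<pi> i (N-i) a) (proj \<pi> i (N-i) b) < \<epsilon>0"
      proof (rule ex_uniform_d)
        fix i assume "i \<le> N"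
        then have "continuous_on (Xs N) (proj \<pi> i (N-i))"
          using proj_cont[of \<pi> Xs i "N-i", OF pi_maps pi_cont] by simp
        then have "uniformly_continuous_on (Xs N) (proj \<pi> i (N-i))"
          using cpt compact_uniformly_continuous by blast
        then have "\<exists>d>0. \<forall>b\<in>Xs N. \<forall>a\<in>Xs N. dist a b < d \<longrightarrow>
              dist (proj \<pi> i (N-i) a) (proj \<pi> i (N-i) b) < \<epsilon>0"
          unfolding uniformly_continuous_on_def using \<epsilon>0(1) by blast
        then show "\<exists>d>0. \<forall>a\<in>Xs N. \<forall>b\<in>Xs N. dist a b < d \<longrightarrow>
              dist (proj \<pi> i (N-i) a) (proj \<pi> i (N-i) b) < \<epsilon>0"
          by blast
      qed auto
      then obtain \<eta>1 where \<eta>1: "\<eta>1 > 0" "\<And>i a b. i \<le> N \<Longrightarrow> a \<in> Xs N \<Longrightarrow> b \<in> Xs N \<Longrightarrow> dist a b < \<eta>1 \<Longrightarrow>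
              dist (proj \<pi> i (N-i) a) (proj \<pi> i (N-i) b) < \<epsilon>0"
        by blast
      have uc2: "uniformly_continuous_on (Xs N) (fs N)"
        using cpt fs_cont compact_uniformly_continuous by blast
      have h3: "\<eta>1/3 > 0" using \<eta>1(1) by simp
      have "\<exists>d>0. \<forall>b\<in>Xs N. \<forall>a\<in>Xs N. dist a b < d \<longrightarrow> dist (fs N a) (fs N b) < \<eta>1/3"
        using uc2 h3 unfolding uniformly_continuous_on_def by blast
      then obtain \<eta>2 where \<eta>2: "\<eta>2 > 0" "\<And>a b. a \<in> Xs N \<Longrightarrow> b \<in> Xs N \<Longrightarrow> dist a b < \<eta>2 \<Longrightarrow>
              dist (fs N a) (fs N b) < \<eta>1/3"
        by blast
      define \<rho> where "\<rho> = min (\<eta>1/3) \<eta>2"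
      have \<rho>: "\<rho> > 0" using \<eta>1 \<eta>2 by (simp add: \<rho>_def)
      obtain m where m: "\<And>v. v \<in> Xs (N+m) \<Longrightarrow> \<exists>y\<in>inv_lim Xs \<pi>. dist (proj \<pi> N m v) (y N) < \<rho>"
        using approx[of Xs \<pi> \<rho> N, OF cpt pi_cont pi_maps \<rho>] by blast
      have "continuous_on (Xs (N+m)) (proj \<pi> N m)"
        using proj_cont[of \<pi> Xs N m, OF pi_maps pi_cont] by simp
      then have uc3: "uniformly_continuous_on (Xs (N+m)) (proj \<pi> N m)"
        using cpt compact_uniformly_continuous by blast
      have "\<exists>d>0. \<forall>b\<in>Xs (N+m). \<forall>a\<in>Xs (N+m). dist a b < d \<longrightarrow> dist (proj \<pi> N m a) (proj \<pi> N m b) < \<eta>1/3"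
        using uc3 h3 unfolding uniformly_continuous_on_def by blast
      then obtain \<eta>3 where \<eta>3: "\<eta>3 > 0" "\<And>a b. a \<in> Xs (N+m) \<Longrightarrow> b \<in> Xs (N+m) \<Longrightarrow> dist a b < \<eta>3 \<Longrightarrow>
              dist (proj \<pi> N m a) (proj \<pi> N m b) < \<eta>1/3"
        by blast
      obtain k v where ch: "delta_chain (fs (N+m)) (Xs (N+m)) (\<eta>3/2) k v" "v 0 = x (N+m)" "v k = x (N+m)"
      proof -
        have h: "\<eta>3/2 > 0" using \<eta>3(1) by simp
        from xCR[of "N+m"] have "\<forall>\<delta>>0. \<exists>k v. delta_chain (fs (N+m)) (Xs (N+m)) \<delta> k v \<and> v 0 = x (N+m) \<and> v k = x (N+m)"
          by (simp add: CR_def)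
        then have "\<exists>k v. delta_chain (fs (N+m)) (Xs (N+m)) (\<eta>3/2) k v \<and> v 0 = x (N+m) \<and> v k = x (N+m)"
          using h by blast
        then show ?thesis using that by blast
      qed
      have vin: "\<And>j. j \<le> k \<Longrightarrow> v j \<in> Xs (N+m)" using ch(1) by (simp add: delta_chain_def)
      have k0: "0 < k" using ch(1) by (simp add: delta_chain_def)
      define u where "u j = proj \<pi> N m (v j)" for j
      have uin: "\<And>j. j \<le> k \<Longrightarrow> u j \<in> Xs N"
        unfolding u_def using vin proj_maps[of \<pi> Xs _ N m, OF pi_maps] by blast
      have u0: "u 0 = x N" "u k = x N" unfolding u_def using ch proj_lim[OF xX, of N m] by auto
      define y where "y j = (if j = 0 \<or> j = k then x
          else (SOME y. y \<in> inv_lim Xs \<pi> \<and> dist (u j) (y N) < \<rho>))" for j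
      have y: "y j \<in> inv_lim Xs \<pi> \<and> dist (u j) (y j N) < \<rho>" if "j \<le> k" for j
      proof (cases "j = 0 \<or> j = k")
        case True then show ?thesis using xX u0 \<rho> unfolding y_def by auto
      next
        case False
        have ex: "\<exists>y. y \<in> inv_lim Xs \<pi> \<and> dist (u j) (y N) < \<rho>"
          using m[OF vin[OF that]] unfolding u_def by blast
        have "y j = (SOME y. y \<in> inv_lim Xs \<pi> \<and> dist (u j) (y N) < \<rho>)"
          using False by (simp add: y_def)
        then show ?thesis using someI_ex[OF ex] by simp
      qed
      have yN: "y j N \<in> Xs N" if "j \<le> k" for j using y[OF that] by (simp add: inv_lim_def)
      have "delta_chain (lim_map fs) (inv_lim Xs \<pi>) \<delta> k y"
        unfolding delta_chain_def
      proof (intro conjI allI impI)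
        show "0 < k" by (rule k0)
        fix j
        show "j \<le> k \<Longrightarrow> y j \<in> inv_lim Xs \<pi>" using y by blast
        assume jk: "j < k"
        have a1: "dist (fs N (y j N)) (fs N (u j)) < \<eta>1/3"
        proof -
          have "dist (u j) (y j N) < \<rho>" using y[of j] jk by simp
          then have "dist (y j N) (u j) < \<eta>2" unfolding \<rho>_def by (simp add: dist_commute)
          moreover have "y j N \<in> Xs N" "u j \<in> Xs N" using yN uin jk by auto
          ultimately show ?thesis using \<eta>2(2) by blast
        qed
        have "dist (fs (N+m) (v j)) (v (Suc j)) < \<eta>3"
          using ch(1) jk \<eta>3(1) unfolding delta_chain_def by force
        moreover have "fs (N+m) (v j) \<in> Xs (N+m)" using fs_maps[of "N+m"] vin[of j] jk by (auto simp: image_subset_iff)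
        ultimately have "dist (proj \<pi> N m (fs (N+m) (v j))) (u (Suc j)) < \<eta>1/3"
          using \<eta>3(2) vin jk unfolding u_def by auto
        moreover have "fs N (u j) = proj \<pi> N m (fs (N+m) (v j))"
        proof -
          have "v j \<in> Xs (N+m)" using vin jk by simp
          from proj_equiv[of \<pi> Xs fs, OF pi_maps equiv this] show ?thesis unfolding u_def .
        qed
        ultimately have a2: "dist (fs N (u j)) (u (Suc j)) < \<eta>1/3" by simp
        have a3: "dist (u (Suc j)) (y (Suc j) N) < \<eta>1/3"
        proof -
          have "dist (u (Suc j)) (y (Suc j) N) < \<rho>" using y[of "Suc j"] jk by simp
          then show ?thesis unfolding \<rho>_def by simp
        qed
        have "dist (fs N (y j N)) (y (Suc j) N) \<le>
            dist (fs N (y j N)) (fs N (u j)) + dist (fs N (u j)) (u (Suc j)) + dist (u (Suc j)) (y (Suc j) N)"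
          using dist_triangle[of "fs N (y j N)" "y (Suc j) N" "fs N (u j)"]
            dist_triangle[of "fs N (u j)" "y (Suc j) N" "u (Suc j)"] by linarith
        then have dl: "dist (fs N (y j N)) (y (Suc j) N) < \<eta>1" using a1 a2 a3 by linarith
        have "fs N (y j N) \<in> Xs N" using fs_maps[of N] yN[of j] jk by (auto simp: image_subset_iff)
        have "\<forall>i\<le>N. dist (lim_map fs (y j) i) (y (Suc j) i) < \<epsilon>0"
        proof (intro allI impI)
          fix i assume iN: "i \<le> N"
          have yj: "y j \<in> inv_lim Xs \<pi>" "y (Suc j) \<in> inv_lim Xs \<pi>" using y jk by auto
          have e1: "y j i = proj \<pi> i (N-i) (y j N)" "y (Suc j) i = proj \<pi> i (N-i) (y (Suc j) N)"
            using proj_lim[OF yj(1), of i "N-i"] proj_lim[OF yj(2), of i "N-i"] iN by auto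
          have "yjN": "y j N \<in> Xs (i + (N-i))" using yN jk iN by simp
          have e2: "lim_map fs (y j) i = proj \<pi> i (N-i) (fs N (y j N))"
            unfolding lim_map_def using e1(1) proj_equiv[of \<pi> Xs fs, OF pi_maps equiv yjN] iN by simp
          show "dist (lim_map fs (y j) i) (y (Suc j) i) < \<epsilon>0"
            unfolding e2 e1(2)
            by (rule \<eta>1(2)[OF iN \<open>fs N (y j N) \<in> Xs N\<close> yN dl]) (use jk in simp)
        qed
        from \<epsilon>0(2)[OF this] show "dist (lim_map fs (y j)) (y (Suc j)) \<le> \<delta>" by simp
      qed
      moreover have "y 0 = x" "y k = x" unfolding y_def by auto
      ultimately show "\<exists>k y. delta_chain (lim_map fs) (inv_lim Xs \<pi>) \<delta> k y \<and> y 0 = x \<and> y k = x"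
        by blast
    qed
  qed
qed

end
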